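(* Let $n,k\ge 1$, let $W(k)\subseteq[n]^k$ be a (multi)set of $k$-tuples, let $\mathcal C\subseteq\mathbb F_2^n$ be a linear $\eta_0$-balanced code, and suppose $\mathcal C'=\mathrm{dsum}_{W(k)}(\mathcal C)$ is $\eta$-balanced, where $\eta\in(0,1)$. Let $\tilde y\in\mathbb F_2^{W(k)}$ and define $$\mathcal L=\mathcal L(\tilde y,\mathcal C,\mathcal C')=\Big\{(z,\mathrm{dsum}_{W(k)}(z)) : z\in\mathcal C,\ \Delta(\mathrm{dsum}_{W(k)}(z),\tilde y)\le \tfrac12-\sqrt\eta\Big\}.$$ Let $\zeta<1/2$ and suppose $\mathcal L'$ is a $\zeta$-cover of $\mathcal L$ such that $\Delta(y',\tilde y)\le \frac12-\sqrt\eta$ for every $(z',y')\in\mathcal L'$. If $W(k)$ is a $(1-2\zeta,\eta)$-parity sampler, then there exists $\mathcal L''\subseteq\mathcal L'$ with $|\mathcal L''|\le 1/\eta$ which is a $(2\zeta)$-cover of $\mathcal L$.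
   Context: For $z,z'\in\mathbb F_2^m$, $\Delta(z,z')=|\{i: z_i\neq z'_i\}|/m$ is the relative Hamming distance, and $\mathrm{bias}(z)=|\mathbb E_{i\in[m]}(-1)^{z_i}|$. A code $\mathcal C$ is $\varepsilon$-balanced if $\mathrm{bias}(z+z')\le\varepsilon$ for all distinct $z,z'\in\mathcal C$. For $W(k)\subseteq[n]^k$ and $z\in\mathbb F_2^n$, the direct sum lifting $\mathrm{dsum}_{W(k)}(z)\in\mathbb F_2^{W(k)}$ has coordinates $y_{\mathfrak s}=\sum_{i\in\mathfrak s} z_i$ for $\mathfrak s\in W(k)$ (sum over the entries of the tuple), and $\mathrm{dsum}_{W(k)}(\mathcal C)=\{\mathrm{dsum}_{W(k)}(z):z\in\mathcal C\}$. $W(k)$ is an $(\varepsilon_0,\varepsilon)$-parity sampler if every $z\in\mathbb F_2^n$ with $\mathrm{bias}(z)\le\varepsilon_0$ satisfies $\mathrm{bias}(\mathrm{dsum}_{W(k)}(z))\le\varepsilon$. Given a set $\mathcal L=\{(z,\mathrm{dsum}_{W(k)}(z)): z\in A\}$ with $A\subseteq\mathcal C$, a set $\mathcal L'=\{(z^{(j)},\mathrm{dsum}_{W(k)}(z^{(j)}))\}_{j=1}^m$ with $z^{(j)}\in\mathbb F_2^n$ is a $\zeta$-cover of $\mathcal L$ if for every $(z,y)\in\mathcal L$ there is $(z',y')\in\mathcal L'$ with $\mathrm{bias}(z-z')>1-2\zeta$ (i.e. $\Delta(z,z')<\zeta$ or $\Delta(z,z')>1-\zeta$). *)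

theory Defs
  imports Complex_Main
begin

text \<open>Vectors in F_2^m are represented as bool lists of length m (True = 1).
  Addition (= subtraction) in F_2^m is coordinatewise xor.\<close>

definition vadd :: "bool list \<Rightarrow> bool list \<Rightarrow> bool list" where
  "vadd x y = map2 (\<noteq>) x y"

definition hdist :: "bool list \<Rightarrow> bool list \<Rightarrow> real" where
  "hdist x y = real (card {i. i < length x \<and> x ! i \<noteq> y ! i}) / real (length x)"

definition bias :: "bool list \<Rightarrow> real" where
  "bias z = \<bar>(\<Sum>i<length z. (if z ! i then -1 else 1 :: real)) / real (length z)\<bar>"

definition balanced :: "real \<Rightarrow> bool list set \<Rightarrow> bool" where
  "balanced eps C \<longleftrightarrow> (\<forall>z\<in>C. \<forall>z'\<in>C. z \<noteq> z' \<longrightarrow> bias (vadd z z') \<le> eps)"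

definition linear_code :: "nat \<Rightarrow> bool list set \<Rightarrow> bool" where
  "linear_code n C \<longleftrightarrow> C \<subseteq> {z. length z = n} \<and> replicate n False \<in> C \<and>
     (\<forall>x\<in>C. \<forall>y\<in>C. vadd x y \<in> C)"

text \<open>The (multi)set W(k) is a list of k-tuples (lists) over [n] = {0..<n};
  the coordinates of the lifted word are indexed by the entries of W (with multiplicity).
  y_s = sum over the entries i of s of z_i (in F_2).\<close>
definition dsum :: "nat list list \<Rightarrow> bool list \<Rightarrow> bool list" where
  "dsum W z = map (\<lambda>s. odd (length (filter (\<lambda>i. z ! i) s))) W"

definition parity_sampler :: "nat \<Rightarrow> nat list list \<Rightarrow> real \<Rightarrow> real \<Rightarrow> bool" where
  "parity_sampler n W eps0 eps \<longleftrightarrow>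
     (\<forall>z. length z = n \<longrightarrow> bias z \<le> eps0 \<longrightarrow> bias (dsum W z) \<le> eps)"

definition list_L :: "nat list list \<Rightarrow> bool list \<Rightarrow> bool list set \<Rightarrow> real \<Rightarrow>
    (bool list \<times> bool list) set" where
  "list_L W ytil C eta =
     {(z, dsum W z) | z. z \<in> C \<and> hdist (dsum W z) ytil \<le> 1/2 - sqrt eta}"

definition is_cover :: "nat \<Rightarrow> nat list list \<Rightarrow> real \<Rightarrow> (bool list \<times> bool list) set \<Rightarrow>
    (bool list \<times> bool list) set \<Rightarrow> bool" where
  "is_cover n W zeta L L' \<longleftrightarrow>
     (\<forall>(z', y') \<in> L'. length z' = n \<and> y' = dsum W z') \<and>
     (\<forall>(z, y) \<in> L. \<exists>(z', y') \<in> L'. bias (vadd z z') > 1 - 2 * zeta)"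

end

theory Submission
  imports Defs "HOL-Analysis.Convex"
begin

definition dd :: "nat \<Rightarrow> bool list \<Rightarrow> bool list \<Rightarrow> real" where
  "dd m x y = (\<Sum>i<m. if x!i \<noteq> y!i then 1 else 0)"

lemma sum_pm: "(\<Sum>i<m. if P i then 1 else -1 :: real) = real m - 2*(\<Sum>i<m. if \<not> P i then 1 else 0)"
  by (induction m) auto

lemma vadd_len: "length (vadd x y) = min (length x) (length y)"
  by (simp add: vadd_def)

lemma vadd_nth: "i < length x \<Longrightarrow> i < length y \<Longrightarrow> vadd x y ! i = (x!i \<noteq> y!i)"
  by (simp add: vadd_def)

lemma vadd_comm: "vadd x y = vadd y x"
  unfolding vadd_def by (subst zip_commute) (auto simp: map_map)

lemma bias_dd: assumes "length x = m" "length y = m" "m > 0"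
  shows "bias (vadd x y) = \<bar>real m - 2*dd m x y\<bar> / real m"
proof -
  have "(\<Sum>i<m. (if vadd x y ! i then -1 else 1 :: real)) = (\<Sum>i<m. if x!i = y!i then 1 else -1)"
    by (rule sum.cong) (use assms in \<open>auto simp: vadd_nth\<close>)
  also have "\<dots> = real m - 2 * dd m x y" unfolding dd_def by (subst sum_pm) simp
  finally show ?thesis unfolding bias_def using assms by (simp add: vadd_len)
qed

lemma card_sum: fixes m :: nat shows "real (card {i. i < m \<and> P i}) = (\<Sum>i<m. if P i then 1 else 0)"
proof (induction m)
  case 0 thus ?case by simp
next
  case (Suc m)
  have e: "{i. i < Suc m \<and> P i} = (if P m then insert m {i. i<m \<and> P i} else {i. i<m \<and> P i})"
    by (auto simp: less_Suc_eq)
  have f: "finite {i. i<m \<and> P i}" by simp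
  show ?case unfolding e using Suc f by (simp add: card_insert_disjoint)
qed

lemma hdist_dd: "length x = m \<Longrightarrow> hdist x y = dd m x y / real m"
  unfolding hdist_def dd_def using card_sum[of m "\<lambda>i. x!i \<noteq> y!i"] by simp

lemma dd_tri1: "dd m x z \<le> dd m x y + dd m y z"
  unfolding dd_def by (simp only: sum.distrib[symmetric], rule sum_mono) auto

lemma dd_tri2: "dd m x y + dd m y z + dd m x z \<le> 2 * real m"
proof -
  have "dd m x y + dd m y z + dd m x z \<le> (\<Sum>i<m. 2)"
    unfolding dd_def by (simp only: sum.distrib[symmetric], rule sum_mono) auto
  thus ?thesis by simp
qed

lemma dd_sym: "dd m x y = dd m y x"
  unfolding dd_def by (rule sum.cong) auto

lemma dd_bounds: "0 \<le> dd m x y" "dd m x y \<le> real m"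
proof -
  show "0 \<le> dd m x y" unfolding dd_def by (rule sum_nonneg) auto
  have "dd m x y \<le> (\<Sum>i<m. 1)" unfolding dd_def by (rule sum_mono) auto
  thus "dd m x y \<le> real m" by simp
qed

lemma odd_filter_xor:
  "odd (length (filter (\<lambda>i. P i \<noteq> Q i) s)) = (odd (length (filter P s)) \<noteq> odd (length (filter Q s)))"
  by (induction s) auto

lemma dsum_len: "length (dsum W z) = length W" by (simp add: dsum_def)

lemma dsum_vadd: assumes "length x = n" "length y = n" "\<forall>s\<in>set W. set s \<subseteq> {..<n}"
  shows "dsum W (vadd x y) = vadd (dsum W x) (dsum W y)"
proof (rule nth_equalityI)
  show "length (dsum W (vadd x y)) = length (vadd (dsum W x) (dsum W y))"
    by (simp add: dsum_len vadd_len)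
  fix j assume "j < length (dsum W (vadd x y))"
  hence j: "j < length W" by (simp add: dsum_len)
  have s: "set (W!j) \<subseteq> {..<n}" using assms(3) j by auto
  have "filter (\<lambda>i. vadd x y ! i) (W!j) = filter (\<lambda>i. x!i \<noteq> y!i) (W!j)"
    by (rule filter_cong) (use s assms in \<open>auto simp: vadd_nth\<close>)
  moreover have "odd (length (filter (\<lambda>i. x!i \<noteq> y!i) (W!j))) = (odd (length (filter ((!) x) (W!j))) \<noteq> odd (length (filter ((!) y) (W!j))))"
    using odd_filter_xor[of "(!) x" "(!) y"] by simp
  ultimately show "dsum W (vadd x y) ! j = vadd (dsum W x) (dsum W y) ! j"
    using j by (simp add: dsum_def vadd_nth)
qed

lemma tri:
  fixes a b c nn t :: real
  assumes "0\<le>a" "a\<le>nn" "0\<le>b" "b\<le>nn" "c \<le> a+b" "a \<le> b+c" "b \<le> a+c" "a+b+c \<le> 2*nn"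
    "\<bar>nn - 2*a\<bar> > nn - 2*t" "\<bar>nn-2*b\<bar> > nn - 2*t"
  shows "\<bar>nn - 2*c\<bar> > nn - 4*t"
proof -
  have A: "a < t \<or> a > nn - t" using assms(9) by (cases "nn-2*a \<ge> 0") auto
  have B: "b < t \<or> b > nn - t" using assms(10) by (cases "nn-2*b \<ge> 0") auto
  have C1: "\<bar>nn - 2*c\<bar> \<ge> nn - 2*c" and C2: "\<bar>nn - 2*c\<bar> \<ge> 2*c - nn" by auto
  from A B C1 C2 assms(1-8) show ?thesis by linarith
qed

lemma johnson:
  fixes u :: "'a \<Rightarrow> nat \<Rightarrow> real"
  assumes fin: "finite S" and m: "m > 0" and eta: "eta > 0"
    and A: "\<forall>p\<in>S. (\<Sum>i<m. u p i) \<ge> 2*sqrt eta * real m"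
    and sq: "\<forall>p\<in>S. \<forall>i<m. u p i * u p i = 1"
    and B: "\<forall>p\<in>S. \<forall>q\<in>S. p\<noteq>q \<longrightarrow> (\<Sum>i<m. u p i * u q i) \<le> eta * real m"
  shows "real (card S) \<le> 1/eta"
proof (cases "S = {}")
  case True thus ?thesis using eta by simp
next
  case False
  define N where "N = real (card S)"
  have N1: "N \<ge> 1" using False fin by (simp add: N_def Suc_le_eq card_gt_0_iff)
  define T where "T = (\<Sum>i<m. \<Sum>p\<in>S. u p i)"
  have T1: "T = (\<Sum>p\<in>S. \<Sum>i<m. u p i)" unfolding T_def by (rule sum.swap)
  have "(\<Sum>p\<in>S. 2*sqrt eta*real m) \<le> (\<Sum>p\<in>S. \<Sum>i<m. u p i)"
    by (rule sum_mono) (use A in auto)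
  hence T2: "T \<ge> N * (2*sqrt eta*real m)" using T1 by (simp add: N_def)
  have CS: "T^2 \<le> (\<Sum>i<m. (\<Sum>p\<in>S. u p i)^2) * real m"
    using sum_squared_le_sum_of_squares[of "\<lambda>i. \<Sum>p\<in>S. u p i" "{..<m}"] by (simp add: T_def)
  have "(\<Sum>i<m. (\<Sum>p\<in>S. u p i)^2) = (\<Sum>i<m. \<Sum>p\<in>S. \<Sum>q\<in>S. u p i * u q i)"
    by (simp add: power2_eq_square sum_product)
  also have "\<dots> = (\<Sum>p\<in>S. \<Sum>i<m. \<Sum>q\<in>S. u p i * u q i)" by (rule sum.swap)
  also have "\<dots> = (\<Sum>p\<in>S. \<Sum>q\<in>S. \<Sum>i<m. u p i * u q i)"
    by (rule sum.cong[OF refl], rule sum.swap)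
  finally have E: "(\<Sum>i<m. (\<Sum>p\<in>S. u p i)^2) = (\<Sum>p\<in>S. \<Sum>q\<in>S. \<Sum>i<m. u p i * u q i)" .
  have G: "(\<Sum>q\<in>S. \<Sum>i<m. u p i * u q i) \<le> real m + (N-1)*(eta*real m)" if p: "p \<in> S" for p
  proof -
    have "(\<Sum>q\<in>S. \<Sum>i<m. u p i * u q i) = (\<Sum>i<m. u p i * u p i) + (\<Sum>q\<in>S-{p}. \<Sum>i<m. u p i * u q i)"
      using fin p by (simp add: sum.remove)
    also have "(\<Sum>i<m. u p i * u p i) = real m" using sq p by simp
    also have "(\<Sum>q\<in>S-{p}. \<Sum>i<m. u p i * u q i) \<le> of_nat (card (S-{p})) * (eta*real m)"
      by (rule sum_bounded_above) (use B p in auto)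
    also have "real (card (S-{p})) = N - 1" using fin p N1 by (simp add: N_def card_Diff_singleton of_nat_diff)
    finally show ?thesis by simp
  qed
  have "(\<Sum>p\<in>S. \<Sum>q\<in>S. \<Sum>i<m. u p i * u q i) \<le> (\<Sum>p\<in>S. real m + (N-1)*(eta*real m))"
    by (rule sum_mono) (use G in auto)
  hence H: "(\<Sum>i<m. (\<Sum>p\<in>S. u p i)^2) \<le> N * (real m + (N-1)*(eta*real m))"
    using E by (simp add: N_def)
  have P0: "0 \<le> N * (2*sqrt eta*real m)" using N1 eta by simp
  have "(N * (2*sqrt eta*real m))^2 \<le> T^2" using T2 P0 by (rule power_mono)
  also have "\<dots> \<le> N * (real m + (N-1)*(eta*real m)) * real m"
    using CS H m by (meson mult_right_mono of_nat_0_le_iff order_trans)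
  finally have "(N * (2*sqrt eta*real m))^2 \<le> N * (real m + (N-1)*(eta*real m)) * real m" .
  moreover have "(N * (2*sqrt eta*real m))^2 = N^2*4*(sqrt eta)^2*real m^2" by (simp add: power_mult_distrib)
  moreover have "(sqrt eta)^2 = eta" using eta by simp
  ultimately have "N^2*4*eta*real m^2 \<le> N * (real m + (N-1)*(eta*real m)) * real m" by simp
  hence "(N * real m^2) * (4*eta*N) \<le> (N * real m^2) * (1 + (N-1)*eta)"
    by (simp add: algebra_simps power2_eq_square)
  hence "4*eta*N \<le> 1 + (N-1)*eta" using N1 m by (simp add: mult_le_cancel_left_pos)
  hence "eta * N \<le> 1" using eta N1 by (simp add: algebra_simps)
  thus ?thesis using eta by (simp add: N_def field_simps)
qed

lemma bias_gt: assumes "n > 0" "length x = n" "length y = n"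
  shows "bias (vadd x y) > c \<longleftrightarrow> \<bar>real n - 2*dd n x y\<bar> > c * real n"
  using assms by (simp add: bias_dd pos_less_divide_eq)

theorem mainTheorem1:
  fixes n k :: nat and W :: "nat list list" and C :: "bool list set"
    and eta0 eta zeta :: real and ytil :: "bool list"
    and L' :: "(bool list \<times> bool list) set"
  assumes "n \<ge> 1" and "k \<ge> 1"
    and "W \<noteq> []"
    and "\<forall>s\<in>set W. length s = k \<and> set s \<subseteq> {..<n}"
    and "linear_code n C" and "balanced eta0 C"
    and "balanced eta (dsum W ` C)"
    and "0 < eta" and "eta < 1"
    and "length ytil = length W"
    and "zeta < 1/2"
    and "finite L'"
    and "is_cover n W zeta (list_L W ytil C eta) L'"
    and "\<forall>(z', y') \<in> L'. hdist y' ytil \<le> 1/2 - sqrt eta"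
    and "parity_sampler n W (1 - 2 * zeta) eta"
  shows "\<exists>L'' \<subseteq> L'. real (card L'') \<le> 1 / eta \<and>
           is_cover n W (2 * zeta) (list_L W ytil C eta) L''"
proof -
  define m where "m = length W"
  have m0: "m > 0" using assms(3) by (simp add: m_def)
  have n0: "n > 0" using assms(1) by simp
  note cov = assms(13)[unfolded is_cover_def]
  have Lp: "\<forall>p\<in>L'. length (fst p) = n \<and> snd p = dsum W (fst p)" using cov by auto
  have idx: "\<forall>s\<in>set W. set s \<subseteq> {..<n}" using assms(4) by auto
  define good where "good S \<longleftrightarrow> S \<subseteq> L' \<and> (\<forall>p\<in>S. \<forall>q\<in>S. p\<noteq>q \<longrightarrow> bias (vadd (fst p) (fst q)) \<le> 1-2*zeta)" for S
  define F where "F = {S. good S}"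
  have "F \<subseteq> Pow L'" unfolding F_def good_def by auto
  hence finF: "finite F" using assms(12) finite_subset by blast
  have eF: "{} \<in> F" unfolding F_def good_def by simp
  define M where "M = Max (card ` F)"
  have "M \<in> card ` F" unfolding M_def by (rule Max_in) (use finF eF in auto)
  then obtain S where S: "S \<in> F" "card S = M" by auto
  have maxS: "card T \<le> card S" if "T \<in> F" for T
    using Max_ge[of "card ` F" "card T"] finF that S(2) unfolding M_def by auto
  have SL: "S \<subseteq> L'" and Sg: "\<forall>p\<in>S. \<forall>q\<in>S. p\<noteq>q \<longrightarrow> bias (vadd (fst p) (fst q)) \<le> 1-2*zeta"
    using S(1) unfolding F_def good_def by auto
  have finS: "finite S" using SL assms(12) finite_subset by blast
  have self: "bias (vadd x x) = 1" if "length x = n" for x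
  proof -
    have "dd n x x = 0" by (simp add: dd_def)
    thus ?thesis using bias_dd[OF that that n0] n0 by simp
  qed
  have ext: "\<exists>s\<in>S. bias (vadd (fst x) (fst s)) > 1-2*zeta" if x: "x \<in> L'" and zp: "zeta > 0" for x
  proof (rule ccontr)
    assume neg: "\<not> ?thesis"
    have lx: "length (fst x) = n" using Lp x by auto
    have xS: "x \<notin> S"
    proof
      assume "x \<in> S"
      with neg have "bias (vadd (fst x) (fst x)) \<le> 1 - 2*zeta" by auto
      with self[OF lx] zp show False by simp
    qed
    have negs: "\<forall>s\<in>S. bias (vadd (fst x) (fst s)) \<le> 1-2*zeta" using neg by (meson not_less)
    have "good (insert x S)" unfolding good_def
    proof (intro conjI ballI impI)
      show "insert x S \<subseteq> L'" using SL x by auto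
      fix p q assume p: "p \<in> insert x S" and q: "q \<in> insert x S" and pq: "p \<noteq> q"
      show "bias (vadd (fst p) (fst q)) \<le> 1-2*zeta"
      proof (cases "p = x")
        case True
        with q pq have "q \<in> S" by auto
        thus ?thesis using negs True by blast
      next
        case False
        hence pS: "p \<in> S" using p by blast
        show ?thesis
        proof (cases "q = x")
          case True
          have "bias (vadd (fst x) (fst p)) \<le> 1-2*zeta" using negs pS by blast
          thus ?thesis using True vadd_comm[of "fst p" "fst x"] by simp
        next
          case False
          hence "q \<in> S" using q by blast
          thus ?thesis using Sg pS pq by blast
        qed
      qed
    qed
    hence "insert x S \<in> F" unfolding F_def by simp
    hence "card (insert x S) \<le> card S" by (rule maxS)
    with xS finS show False by simp
  qed
  define u where "u p i = (if snd p ! i = ytil ! i then 1 else -1 :: real)" for p :: "bool list \<times> bool list" and i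
  have cardS: "real (card S) \<le> 1/eta"
  proof (rule johnson[OF finS m0 assms(8), of u])
    show "\<forall>p\<in>S. (\<Sum>i<m. u p i) \<ge> 2*sqrt eta * real m"
    proof
      fix p assume p: "p \<in> S"
      have ls: "length (snd p) = m" using Lp p SL by (auto simp: m_def dsum_len)
      have "(\<Sum>i<m. u p i) = real m - 2 * dd m (snd p) ytil"
        unfolding u_def dd_def by (subst sum_pm) simp
      moreover have "hdist (snd p) ytil \<le> 1/2 - sqrt eta" using assms(14) p SL by (cases p) auto
      hence "dd m (snd p) ytil / real m \<le> 1/2 - sqrt eta" using hdist_dd[OF ls] by simp
      hence "dd m (snd p) ytil \<le> (1/2 - sqrt eta) * real m" using m0 by (simp add: divide_le_eq)
      ultimately show "(\<Sum>i<m. u p i) \<ge> 2*sqrt eta * real m" by (simp add: algebra_simps)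
    qed
    show "\<forall>p\<in>S. \<forall>i<m. u p i * u p i = 1" by (simp add: u_def)
    show "\<forall>p\<in>S. \<forall>q\<in>S. p\<noteq>q \<longrightarrow> (\<Sum>i<m. u p i * u q i) \<le> eta * real m"
    proof (intro ballI impI)
      fix p q assume p: "p \<in> S" and q: "q \<in> S" and pq: "p \<noteq> q"
      have lp: "length (fst p) = n" "snd p = dsum W (fst p)" using Lp p SL by auto
      have lq: "length (fst q) = n" "snd q = dsum W (fst q)" using Lp q SL by auto
      have fpq: "fst p \<noteq> fst q" using pq lp(2) lq(2) by (metis prod.expand)
      have b1: "bias (vadd (fst p) (fst q)) \<le> 1 - 2*zeta" using Sg p q pq by auto
      have "length (vadd (fst p) (fst q)) = n" using lp lq by (simp add: vadd_len)
      hence "bias (dsum W (vadd (fst p) (fst q))) \<le> eta" using assms(15) b1 unfolding parity_sampler_def by blast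
      hence "bias (vadd (snd p) (snd q)) \<le> eta" using dsum_vadd[OF lp(1) lq(1) idx] lp lq by simp
      moreover have "length (snd p) = m" "length (snd q) = m" using lp lq by (auto simp: m_def dsum_len)
      ultimately have "\<bar>real m - 2*dd m (snd p) (snd q)\<bar> / real m \<le> eta" using bias_dd m0 by metis
      hence "\<bar>real m - 2*dd m (snd p) (snd q)\<bar> \<le> eta * real m" using m0 by (simp add: divide_le_eq)
      moreover have "(\<Sum>i<m. u p i * u q i) = (\<Sum>i<m. if snd p ! i = snd q ! i then 1 else -1)"
        by (rule sum.cong) (auto simp: u_def)
      moreover have "\<dots> = real m - 2 * dd m (snd p) (snd q)" unfolding dd_def by (subst sum_pm) simp
      ultimately show "(\<Sum>i<m. u p i * u q i) \<le> eta * real m" by simp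
    qed
  qed
  have "is_cover n W (2 * zeta) (list_L W ytil C eta) S"
    unfolding is_cover_def
  proof (intro conjI)
    show "\<forall>(z', y')\<in>S. length z' = n \<and> y' = dsum W z'" using Lp SL by fastforce
    show "\<forall>(z, y)\<in>list_L W ytil C eta. \<exists>(z', y')\<in>S. 1 - 2 * (2 * zeta) < bias (vadd z z')"
    proof (clarify)
      fix z y assume zy: "(z, y) \<in> list_L W ytil C eta"
      hence zC: "z \<in> C" unfolding list_L_def by auto
      hence lz: "length z = n" using assms(5) unfolding linear_code_def by auto
      obtain p where p: "p \<in> L'" and bp: "bias (vadd z (fst p)) > 1 - 2*zeta"
        using cov zy by fastforce
      have lp: "length (fst p) = n" using Lp p by auto
      have "\<bar>real n - 2*dd n z (fst p)\<bar> \<le> real n" using dd_bounds[of n z "fst p"] by auto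
      hence "bias (vadd z (fst p)) \<le> 1" using bias_dd[OF lz lp n0] n0 by simp
      hence zp: "zeta > 0" using bp by simp
      obtain s where s: "s \<in> S" and bs: "bias (vadd (fst p) (fst s)) > 1 - 2*zeta"
        using ext[OF p zp] by blast
      have ls: "length (fst s) = n" using Lp s SL by auto
      have A: "\<bar>real n - 2*dd n z (fst p)\<bar> > real n - 2*(zeta*real n)"
        using bp bias_gt[OF n0 lz lp] by (simp add: algebra_simps)
      have B: "\<bar>real n - 2*dd n (fst p) (fst s)\<bar> > real n - 2*(zeta*real n)"
        using bs bias_gt[OF n0 lp ls] by (simp add: algebra_simps)
      have "\<bar>real n - 2*dd n z (fst s)\<bar> > real n - 4*(zeta*real n)"
        using tri[OF dd_bounds dd_bounds dd_tri1 _ _ _ A B]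
          dd_tri1[of n z "fst p" "fst s"] dd_tri1[of n "fst p" "fst s" z]
          dd_tri2[of n z "fst p" "fst s"] dd_sym[of n "fst s" z] dd_sym[of n "fst p" z] dd_sym[of n "fst s" "fst p"]
        by (smt (verit))
      hence "bias (vadd z (fst s)) > 1 - 2*(2*zeta)"
        using bias_gt[OF n0 lz ls] by (simp add: algebra_simps)
      thus "\<exists>(z', y')\<in>S. 1 - 2 * (2 * zeta) < bias (vadd z z')"
        using s by (intro bexI[of _ s]) auto
    qed
  qed
  thus ?thesis using SL cardS by blast
qed

end
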